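(* Let $(X,\mathcal{M})$ be a measurable space, $\Sigma$ a compact Hausdorff group with Haar probability measure $\mu_\Sigma$ acting measurably on $X$ via $T_\sigma$, and let $P,Q\in\mathcal{P}(X)$ be $\Sigma$-invariant (i.e. $P\circ T_\sigma^{-1}=P$, $Q\circ T_\sigma^{-1}=Q$ for all $\sigma\in\Sigma$). (i) If $\Gamma\subset\mathcal{M}_b(X)$ satisfies $S_\Sigma[\Gamma]\subset\Gamma$, then $D_f^\Gamma(Q\|P)=D_f^{\Gamma^{\mathrm{inv}}_\Sigma}(Q\|P)$ and $W^\Gamma(Q,P)=W^{\Gamma^{\mathrm{inv}}_\Sigma}(Q,P)$. (ii) If $\Gamma\subset\mathcal{M}_b(X)^2$ satisfies $S_\Sigma[\Gamma]\subset\Gamma$ (with $S_\Sigma$ applied componentwise) and the cost $c$ is $\Sigma$-invariant, i.e. $c(T_\sigma(x),T_\sigma(y))=c(x,y)$ for all $\sigma\in\Sigma$, $x,y\in X$, then $\mathcal{SD}^\Gamma_{c,\epsilon}(Q,P)=\mathcal{SD}^{\Gamma^{\mathrm{inv}}_\Sigma}_{c,\epsilon}(Q,P)$.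
   Context: $\mathcal{M}_b(X)$: bounded measurable functions; $\mathcal{P}(X)$: probability measures. $S_\Sigma[\gamma](x)=\int_\Sigma\gamma(T_{\sigma}(x))\mu_\Sigma(d\sigma)$. For $\Gamma$ a set of functions (or tuples of functions), $\Gamma^{\mathrm{inv}}_\Sigma=\{\gamma\in\Gamma:\gamma\circ T_\sigma=\gamma\ \forall\sigma\in\Sigma\}$ (componentwise for tuples). Let $f:[0,\infty)\to\mathbb{R}$ be convex, lower semicontinuous, $f(1)=0$, strictly convex at $1$, with Legendre transform $f^*(y)=\sup_x\{yx-f(x)\}$. The $(f,\Gamma)$-divergence is $D_f^\Gamma(Q\|P)=\sup_{\gamma\in\Gamma}\{E_Q[\gamma]-\Lambda_f^P[\gamma]\}$ with $\Lambda_f^P[\gamma]=\inf_{\nu\in\mathbb{R}}\{\nu+E_P[f^*(\gamma-\nu)]\}$. The $\Gamma$-IPM is $W^\Gamma(Q,P)=\sup_{\gamma\in\Gamma}\{E_Q[\gamma]-E_P[\gamma]\}$. For a measurable cost $c:X\times X\to[0,\infty)$, $\epsilon>0$ and $\Gamma$ a set of pairs $(\gamma_1,\gamma_2)$, $W^\Gamma_{c,\epsilon}(Q,P)=\sup_{(\gamma_1,\gamma_2)\in\Gamma}\{E_P[\gamma_1]+E_Q[\gamma_2]-\epsilon E_{P\times Q}[\exp((\gamma_1\oplus\gamma_2-c)/\epsilon)]+\epsilon\}$ where $\gamma_1\oplus\gamma_2(x,y)=\gamma_1(x)+\gamma_2(y)$, and the Sinkhorn divergence is $\mathcal{SD}^\Gamma_{c,\epsilon}(Q,P)=W^\Gamma_{c,\epsilon}(Q,P)-\tfrac12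 W^\Gamma_{c,\epsilon}(Q,Q)-\tfrac12 W^\Gamma_{c,\epsilon}(P,P)$. *)

theory Defs
  imports "HOL-Probability.Probability"
begin

definition Mb :: "'a measure \<Rightarrow> ('a \<Rightarrow> real) set" where
  "Mb M = {g. g \<in> borel_measurable M \<and> (\<exists>B. \<forall>x\<in>space M. \<bar>g x\<bar> \<le> B)}"

(* Haar probability measure on a compact Hausdorff (additively written, not necessarily
   commutative) topological group 's: a Borel probability measure invariant under
   left and right translations. *)
definition haar_prob :: "'s::topological_group_add measure \<Rightarrow> bool" where
  "haar_prob \<mu> \<longleftrightarrow> sets \<mu> = sets (borel :: 's measure) \<and> prob_space \<mu> \<and>
     (\<forall>\<sigma>. distr \<mu> \<mu> (\<lambda>\<tau>. \<sigma> + \<tau>) = \<mu> \<and> distr \<mu> \<mu> (\<lambda>\<tau>. \<tau> + \<sigma>) = \<mu>)"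

definition measurable_action :: "'s::group_add measure \<Rightarrow> 'a measure \<Rightarrow> ('s \<Rightarrow> 'a \<Rightarrow> 'a) \<Rightarrow> bool" where
  "measurable_action \<mu> M T \<longleftrightarrow>
     (\<lambda>(\<sigma>, x). T \<sigma> x) \<in> measurable (\<mu> \<Otimes>\<^sub>M M) M \<and>
     (\<forall>x\<in>space M. T 0 x = x) \<and>
     (\<forall>\<sigma> \<tau>. \<forall>x\<in>space M. T (\<sigma> + \<tau>) x = T \<sigma> (T \<tau> x))"

definition Ssym :: "'s measure \<Rightarrow> ('s \<Rightarrow> 'a \<Rightarrow> 'a) \<Rightarrow> ('a \<Rightarrow> real) \<Rightarrow> ('a \<Rightarrow> real)" where
  "Ssym \<mu> T \<gamma> = (\<lambda>x. \<integral>\<sigma>. \<gamma> (T \<sigma> x) \<partial>\<mu>)"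

definition inv_fun :: "'a measure \<Rightarrow> ('s \<Rightarrow> 'a \<Rightarrow> 'a) \<Rightarrow> ('a \<Rightarrow> real) \<Rightarrow> bool" where
  "inv_fun M T \<gamma> \<longleftrightarrow> (\<forall>\<sigma>. \<forall>x\<in>space M. \<gamma> (T \<sigma> x) = \<gamma> x)"

definition Inv :: "'a measure \<Rightarrow> ('s \<Rightarrow> 'a \<Rightarrow> 'a) \<Rightarrow> ('a \<Rightarrow> real) set \<Rightarrow> ('a \<Rightarrow> real) set" where
  "Inv M T \<Gamma> = {\<gamma>\<in>\<Gamma>. inv_fun M T \<gamma>}"

definition Inv2 :: "'a measure \<Rightarrow> ('s \<Rightarrow> 'a \<Rightarrow> 'a) \<Rightarrow> (('a \<Rightarrow> real) \<times> ('a \<Rightarrow> real)) set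
    \<Rightarrow> (('a \<Rightarrow> real) \<times> ('a \<Rightarrow> real)) set" where
  "Inv2 M T \<Gamma> = {g\<in>\<Gamma>. inv_fun M T (fst g) \<and> inv_fun M T (snd g)}"

definition admissible_f :: "(real \<Rightarrow> real) \<Rightarrow> bool" where
  "admissible_f f \<longleftrightarrow>
     convex_on {0..} f \<and>
     (\<forall>x\<ge>0. ereal (f x) \<le> Liminf (at x within {0..}) (\<lambda>y. ereal (f y))) \<and>
     f 1 = 0 \<and>
     (\<forall>x y t. x \<ge> 0 \<longrightarrow> y \<ge> 0 \<longrightarrow> x \<noteq> y \<longrightarrow> 0 < t \<longrightarrow> t < 1 \<longrightarrow> t * x + (1 - t) * y = 1
        \<longrightarrow> f 1 < t * f x + (1 - t) * f y)"

definition fstar :: "(real \<Rightarrow> real) \<Rightarrow> real \<Rightarrow> ereal" where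
  "fstar f y = (SUP x\<in>{0..}. ereal (y * x - f x))"

definition eexp :: "'a measure \<Rightarrow> ('a \<Rightarrow> ereal) \<Rightarrow> ereal" where
  "eexp P g = enn2ereal (\<integral>\<^sup>+ x. e2ennreal (max 0 (g x)) \<partial>P)
              - enn2ereal (\<integral>\<^sup>+ x. e2ennreal (max 0 (- g x)) \<partial>P)"

definition Lambda_f :: "(real \<Rightarrow> real) \<Rightarrow> 'a measure \<Rightarrow> ('a \<Rightarrow> real) \<Rightarrow> ereal" where
  "Lambda_f f P \<gamma> = (INF \<nu>::real. ereal \<nu> + eexp P (\<lambda>x. fstar f (\<gamma> x - \<nu>)))"

definition fGamma_div :: "(real \<Rightarrow> real) \<Rightarrow> ('a \<Rightarrow> real) set \<Rightarrow> 'a measure \<Rightarrow> 'a measure \<Rightarrow> ereal" where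
  "fGamma_div f \<Gamma> Q P = (SUP \<gamma>\<in>\<Gamma>. ereal (\<integral>x. \<gamma> x \<partial>Q) - Lambda_f f P \<gamma>)"

definition IPM :: "('a \<Rightarrow> real) set \<Rightarrow> 'a measure \<Rightarrow> 'a measure \<Rightarrow> ereal" where
  "IPM \<Gamma> Q P = (SUP \<gamma>\<in>\<Gamma>. ereal ((\<integral>x. \<gamma> x \<partial>Q) - (\<integral>x. \<gamma> x \<partial>P)))"

definition W_ce :: "('a \<Rightarrow> 'a \<Rightarrow> real) \<Rightarrow> real \<Rightarrow> (('a \<Rightarrow> real) \<times> ('a \<Rightarrow> real)) set
    \<Rightarrow> 'a measure \<Rightarrow> 'a measure \<Rightarrow> ereal" where
  "W_ce c \<epsilon> \<Gamma> Q P = (SUP g\<in>\<Gamma>. ereal ((\<integral>x. fst g x \<partial>P) + (\<integral>y. snd g y \<partial>Q)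
      - \<epsilon> * (\<integral>z. exp ((fst g (fst z) + snd g (snd z) - c (fst z) (snd z)) / \<epsilon>) \<partial>(P \<Otimes>\<^sub>M Q))
      + \<epsilon>))"

definition sinkhorn :: "('a \<Rightarrow> 'a \<Rightarrow> real) \<Rightarrow> real \<Rightarrow> (('a \<Rightarrow> real) \<times> ('a \<Rightarrow> real)) set
    \<Rightarrow> 'a measure \<Rightarrow> 'a measure \<Rightarrow> ereal" where
  "sinkhorn c \<epsilon> \<Gamma> Q P = W_ce c \<epsilon> \<Gamma> Q P - ereal (1/2) * W_ce c \<epsilon> \<Gamma> Q Q - ereal (1/2) * W_ce c \<epsilon> \<Gamma> P P"

end

theory Submission
  imports Defs
begin

lemma mono_fstar: "mono (fstar f)"
  unfolding mono_def fstar_def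
proof (intro allI impI SUP_mono)
  fix x y :: real and t :: real assume "x \<le> y" "t \<in> {0..}"
  then have "x * t - f t \<le> y * t - f t" by (simp add: mult_right_mono)
  then show "\<exists>m\<in>{0..}. ereal (x * t - f t) \<le> ereal (y * m - f m)" using \<open>t \<in> {0..}\<close> by (intro bexI[of _ t]) auto
qed

lemma fstar_lb: "ereal (- f 0) \<le> fstar f y"
  unfolding fstar_def by (rule SUP_upper2[where i=0]) auto

lemma meas_fstar[measurable]: "fstar f \<in> borel_measurable borel"
proof (rule borel_measurableI_greater)
  fix y
  have "is_interval {x. y < fstar f x}"
    unfolding is_interval_1 using mono_fstar[of f]
    by (auto simp: mono_def intro: less_le_trans)
  then show "{x \<in> space borel. y < fstar f x} \<in> sets borel"
    using real_interval_borel_measurable by simp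
qed

lemma meas_h: "g \<in> borel_measurable N \<Longrightarrow> (\<lambda>x. e2ennreal (fstar f (g x - \<nu>) + ereal C)) \<in> borel_measurable N"
  apply measurable
  apply simp_all
  done


lemma ereal_aux: assumes "(A::ereal) + ereal c = B + ereal d" shows "A - ereal d = B - ereal c"
  using assms
proof (cases A)
  case (real r)
  then show ?thesis using assms by (cases B) (simp_all add: algebra_simps)
next
  case PInf
  then show ?thesis using assms by (cases B) simp_all
next
  case MInf
  then show ?thesis using assms by (cases B) simp_all
qed

lemma eexp_shift:
  assumes P: "prob_space P" and gm: "g \<in> borel_measurable P"
    and lb: "\<forall>x\<in>space P. - ereal C \<le> g x" and C: "0 \<le> C"
  shows "eexp P g = enn2ereal (\<integral>\<^sup>+x. e2ennreal (g x + ereal C) \<partial>P) - ereal C"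
proof -
  define a where "a = (\<integral>\<^sup>+ x. e2ennreal (max 0 (g x)) \<partial>P)"
  define d where "d = (\<integral>\<^sup>+ x. e2ennreal (max 0 (- g x)) \<partial>P)"
  define b where "b = (\<integral>\<^sup>+x. e2ennreal (g x + ereal C) \<partial>P)"
  have pw: "e2ennreal (max 0 (g x)) + ennreal C = e2ennreal (g x + ereal C) + e2ennreal (max 0 (- g x))"
    if x: "x \<in> space P" for x
  proof (cases "g x")
    case (real r)
    then have r: "-C \<le> r" using lb x by auto
    have e1: "e2ennreal (max 0 (g x)) = ennreal (max 0 r)"
      using real by (simp add: max_def)
    have e2: "e2ennreal (g x + ereal C) = ennreal (r + C)"
      using real by simp
    have e3: "e2ennreal (max 0 (- g x)) = ennreal (max 0 (- r))"
      using real by (simp add: max_def)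
    have "ennreal (max 0 r) + ennreal C = ennreal (max 0 r + C)"
      using C by (rule ennreal_plus[symmetric, rotated]) simp
    also have "\<dots> = ennreal ((r + C) + max 0 (- r))" by (rule arg_cong[where f=ennreal]) (simp add: max_def)
    also have "\<dots> = ennreal (r + C) + ennreal (max 0 (- r))"
      using r by (intro ennreal_plus) auto
    finally show ?thesis using e1 e2 e3 by simp
  next
    case PInf then show ?thesis by simp
  next
    case MInf then show ?thesis using lb x by auto
  qed
  have m1: "(\<lambda>x. e2ennreal (max 0 (g x))) \<in> borel_measurable P" using gm by measurable
  have m2: "(\<lambda>x. e2ennreal (max 0 (- g x))) \<in> borel_measurable P" using gm by measurable
  have m3: "(\<lambda>x. e2ennreal (g x + ereal C)) \<in> borel_measurable P" using gm by measurable
  have sp: "emeasure P (space P) = 1" using P by (simp add: prob_space.emeasure_space_1)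
  have "a + ennreal C = (\<integral>\<^sup>+ x. e2ennreal (max 0 (g x)) + ennreal C \<partial>P)"
    unfolding a_def by (simp add: nn_integral_add m1 sp)
  also have "\<dots> = (\<integral>\<^sup>+ x. e2ennreal (g x + ereal C) + e2ennreal (max 0 (- g x)) \<partial>P)"
    by (rule nn_integral_cong) (rule pw)
  also have "\<dots> = b + d" unfolding b_def d_def by (simp add: nn_integral_add m2 m3)
  finally have sum: "a + ennreal C = b + d" .
  have "d \<le> (\<integral>\<^sup>+ x. ennreal C \<partial>P)" unfolding d_def
  proof (rule nn_integral_mono)
    fix x assume x: "x \<in> space P"
    have "max 0 (- g x) \<le> ereal C" using lb x C
      by (cases "g x") auto
    from e2ennreal_mono[OF this] show "e2ennreal (max 0 (- g x)) \<le> ennreal C"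
      by simp
  qed
  also have "\<dots> = ennreal C" by (simp add: sp)
  finally have dC: "d \<le> ennreal C" .
  have dtop: "d \<noteq> top" using dC by (metis ennreal_neq_top neq_top_trans)
  define d' where "d' = enn2real d"
  have d': "d = ennreal d'" "0 \<le> d'" "d' \<le> C"
    unfolding d'_def using dtop ennreal_enn2real_if[of d] apply simp
    unfolding d'_def apply simp
    unfolding d'_def by (rule enn2real_leI[OF C dC])
  have "enn2ereal a + ereal C = enn2ereal b + ereal d'"
    using arg_cong[OF sum, of enn2ereal] C d' by (simp add: plus_ennreal.rep_eq)
  then have "enn2ereal a - ereal d' = enn2ereal b - ereal C"
    by (rule ereal_aux)
  then show ?thesis unfolding eexp_def using d' a_def d_def b_def by simp
qed


context
  fixes M :: "'a measure" and \<mu> :: "'s::{topological_group_add, t2_space} measure"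
    and T :: "'s \<Rightarrow> 'a \<Rightarrow> 'a"
  assumes haar: "haar_prob \<mu>" and act: "measurable_action \<mu> M T"
begin

lemma sets_mu: "sets \<mu> = sets borel" using haar by (simp add: haar_prob_def)
lemma space_mu: "space \<mu> = UNIV"
  using sets_eq_imp_space_eq[OF sets_mu] by simp
lemma prob_mu: "prob_space \<mu>" using haar by (simp add: haar_prob_def)
lemma Tprod: "(\<lambda>(\<sigma>, x). T \<sigma> x) \<in> measurable (\<mu> \<Otimes>\<^sub>M M) M"
  using act by (simp add: measurable_action_def)
lemma Tmeas: "T \<sigma> \<in> measurable M M"
  using measurable_Pair2[OF Tprod, of \<sigma>] by (simp add: space_mu)
lemma Tspace: "x \<in> space M \<Longrightarrow> T \<sigma> x \<in> space M"
  by (rule measurable_space[OF Tmeas])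
lemma gT_meas: "\<gamma> \<in> borel_measurable M \<Longrightarrow> (\<lambda>p. \<gamma> (T (fst p) (snd p))) \<in> borel_measurable (\<mu> \<Otimes>\<^sub>M M)"
proof -
  assume g: "\<gamma> \<in> borel_measurable M"
  have "\<gamma> \<circ> (\<lambda>(\<sigma>, x). T \<sigma> x) \<in> borel_measurable (\<mu> \<Otimes>\<^sub>M M)"
    by (rule measurable_comp[OF Tprod g])
  moreover have "\<gamma> \<circ> (\<lambda>(\<sigma>, x). T \<sigma> x) = (\<lambda>p. \<gamma> (T (fst p) (snd p)))"
    by (auto simp: fun_eq_iff)
  ultimately show ?thesis by simp
qed
lemma gT_meas1: "\<gamma> \<in> borel_measurable M \<Longrightarrow> x \<in> space M \<Longrightarrow> (\<lambda>\<sigma>. \<gamma> (T \<sigma> x)) \<in> borel_measurable \<mu>"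
  using measurable_Pair1[OF gT_meas] by simp

lemma shift_meas: "(\<lambda>\<sigma>. \<sigma> + \<tau>) \<in> measurable \<mu> \<mu>"
proof -
  have "(\<lambda>\<sigma>::'s. \<sigma> + \<tau>) \<in> measurable borel borel"
    by (intro borel_measurable_continuous_onI continuous_intros)
  then show ?thesis using measurable_cong_sets[OF sets_mu sets_mu] by blast
qed

lemma S_inv: assumes "\<gamma> \<in> borel_measurable M" shows "inv_fun M T (Ssym \<mu> T \<gamma>)"
  unfolding inv_fun_def
proof (intro allI ballI)
  fix \<tau> x assume x: "x \<in> space M"
  have "Ssym \<mu> T \<gamma> (T \<tau> x) = (\<integral>\<sigma>. \<gamma> (T (\<sigma> + \<tau>) x) \<partial>\<mu>)"
    unfolding Ssym_def using act x by (simp add: measurable_action_def)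
  also have "\<dots> = (\<integral>\<sigma>. \<gamma> (T \<sigma> x) \<partial>distr \<mu> \<mu> (\<lambda>\<sigma>. \<sigma> + \<tau>))"
    by (rule integral_distr[OF shift_meas gT_meas1[OF assms x], symmetric])
  also have "\<dots> = Ssym \<mu> T \<gamma> x" using haar by (simp add: haar_prob_def Ssym_def)
  finally show "Ssym \<mu> T \<gamma> (T \<tau> x) = Ssym \<mu> T \<gamma> x" .
qed


lemma Mb_meas: "\<gamma> \<in> Mb M \<Longrightarrow> \<gamma> \<in> borel_measurable M"
  by (simp add: Mb_def)
lemma Mb_bound: "\<gamma> \<in> Mb M \<Longrightarrow> \<exists>B. \<forall>x\<in>space M. \<bar>\<gamma> x\<bar> \<le> B"
  by (simp add: Mb_def)

lemma E_S:
  assumes R: "prob_space R" "sets R = sets M" and Rinv: "\<forall>\<sigma>. distr R M (T \<sigma>) = R"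
    and g: "\<gamma> \<in> Mb M"
  shows "(\<integral>x. Ssym \<mu> T \<gamma> x \<partial>R) = (\<integral>x. \<gamma> x \<partial>R)"
proof -
  interpret pp: pair_prob_space \<mu> R
    by (simp add: pair_prob_space_def pair_sigma_finite_def prob_mu R prob_space_imp_sigma_finite)
  have gm: "\<gamma> \<in> borel_measurable M" using g by (rule Mb_meas)
  obtain B where B: "\<forall>x\<in>space M. \<bar>\<gamma> x\<bar> \<le> B" using Mb_bound[OF g] by blast
  have spR: "space R = space M" using R(2) by (rule sets_eq_imp_space_eq)
  have eq: "(\<lambda>p. \<gamma> (T (fst p) (snd p))) = (\<lambda>(\<sigma>, x). \<gamma> (T \<sigma> x))" by (simp add: fun_eq_iff)
  have m1: "(\<lambda>(\<sigma>, x). \<gamma> (T \<sigma> x)) \<in> borel_measurable (\<mu> \<Otimes>\<^sub>M R)"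
    unfolding eq[symmetric]
    by (subst measurable_cong_sets[OF sets_pair_measure_cong[OF refl R(2)] refl]) (rule gT_meas[OF gm])
  have fin: "finite_measure (\<mu> \<Otimes>\<^sub>M R)"
    using prob_space_pair[OF prob_mu R(1)] by (simp add: prob_space_def)
  have int: "integrable (\<mu> \<Otimes>\<^sub>M R) (\<lambda>(\<sigma>, x). \<gamma> (T \<sigma> x))"
  proof (rule finite_measure.integrable_const_bound[OF fin _ m1, where B=B])
    show "AE p in \<mu> \<Otimes>\<^sub>M R. norm ((\<lambda>(\<sigma>, x). \<gamma> (T \<sigma> x)) p) \<le> B"
    proof (rule AE_I2)
      fix p assume "p \<in> space (\<mu> \<Otimes>\<^sub>M R)"
      then have "snd p \<in> space M" using spR by (simp add: space_pair_measure mem_Times_iff)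
      then have "T (fst p) (snd p) \<in> space M" by (rule Tspace)
      then have "\<bar>\<gamma> (T (fst p) (snd p))\<bar> \<le> B" using B by blast
      then show "norm ((\<lambda>(\<sigma>, x). \<gamma> (T \<sigma> x)) p) \<le> B" by (simp add: case_prod_beta')
    qed
  qed
  have "(\<integral>x. Ssym \<mu> T \<gamma> x \<partial>R) = (\<integral>x. (\<integral>\<sigma>. \<gamma> (T \<sigma> x) \<partial>\<mu>) \<partial>R)"
    by (simp add: Ssym_def)
  also have "\<dots> = (\<integral>\<sigma>. (\<integral>x. \<gamma> (T \<sigma> x) \<partial>R) \<partial>\<mu>)"
    by (rule pp.Fubini_integral[OF int])
  also have "\<dots> = (\<integral>\<sigma>. (\<integral>x. \<gamma> x \<partial>R) \<partial>\<mu>)"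
  proof (rule Bochner_Integration.integral_cong[OF refl])
    fix \<sigma> assume "\<sigma> \<in> space \<mu>"
    have Tm: "T \<sigma> \<in> measurable R M"
      by (subst measurable_cong_sets[OF R(2) refl]) (rule Tmeas)
    have "(\<integral>x. \<gamma> (T \<sigma> x) \<partial>R) = (\<integral>x. \<gamma> x \<partial>distr R M (T \<sigma>))"
      by (rule integral_distr[OF Tm gm, symmetric])
    also have "\<dots> = (\<integral>x. \<gamma> x \<partial>R)" using Rinv by simp
    finally show "(\<integral>x. \<gamma> (T \<sigma> x) \<partial>R) = (\<integral>x. \<gamma> x \<partial>R)" .
  qed
  also have "\<dots> = (\<integral>x. \<gamma> x \<partial>R)"
    by (simp add: prob_space.prob_space[OF prob_mu])
  finally show ?thesis .
qed



lemma ptw: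
  assumes g: "\<gamma> \<in> Mb M" and x: "x \<in> space M"
  shows "e2ennreal (fstar f (Ssym \<mu> T \<gamma> x - \<nu>) + ereal C)
     \<le> (\<integral>\<^sup>+\<sigma>. e2ennreal (fstar f (\<gamma> (T \<sigma> x) - \<nu>) + ereal C) \<partial>\<mu>)"
proof -
  interpret mu: prob_space \<mu> by (rule prob_mu)
  define I where "I = (\<integral>\<^sup>+\<sigma>. e2ennreal (fstar f (\<gamma> (T \<sigma> x) - \<nu>) + ereal C) \<partial>\<mu>)"
  have gm: "\<gamma> \<in> borel_measurable M" using g by (rule Mb_meas)
  obtain B where B: "\<forall>x\<in>space M. \<bar>\<gamma> x\<bar> \<le> B" using Mb_bound[OF g] by blast
  have m: "(\<lambda>\<sigma>. \<gamma> (T \<sigma> x)) \<in> borel_measurable \<mu>" by (rule gT_meas1[OF gm x])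
  have bd: "\<bar>\<gamma> (T \<sigma> x)\<bar> \<le> B" for \<sigma>
    using B Tspace[OF x] by blast
  have intg: "integrable \<mu> (\<lambda>\<sigma>. \<gamma> (T \<sigma> x))"
    by (rule mu.integrable_const_bound[where B=B]) (use bd m in auto)
  have "fstar f (Ssym \<mu> T \<gamma> x - \<nu>) \<le> enn2ereal I - ereal C"
    unfolding fstar_def
  proof (rule SUP_least)
    fix t :: real assume t: "t \<in> {0..}"
    define u where "u = (\<lambda>\<sigma>. t * \<gamma> (T \<sigma> x) + (C - \<nu> * t - f t))"
    have intu: "integrable \<mu> u" unfolding u_def using intg by simp
    have intu': "integrable \<mu> (\<lambda>\<sigma>. max 0 (u \<sigma>))" using intu by simp
    have iu: "(\<integral>\<sigma>. u \<sigma> \<partial>\<mu>) = (Ssym \<mu> T \<gamma> x - \<nu>) * t - f t + C"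
      unfolding u_def Ssym_def using intg by (simp add: algebra_simps mu.prob_space)
    have pw: "ennreal (max 0 (u \<sigma>)) \<le> e2ennreal (fstar f (\<gamma> (T \<sigma> x) - \<nu>) + ereal C)" for \<sigma>
    proof -
      have le: "ereal ((\<gamma> (T \<sigma> x) - \<nu>) * t - f t) \<le> fstar f (\<gamma> (T \<sigma> x) - \<nu>)"
        unfolding fstar_def using t by (rule SUP_upper)
      have eq: "ereal (u \<sigma>) = ereal ((\<gamma> (T \<sigma> x) - \<nu>) * t - f t) + ereal C"
        unfolding u_def by (simp add: algebra_simps)
      have "ereal (u \<sigma>) \<le> fstar f (\<gamma> (T \<sigma> x) - \<nu>) + ereal C"
        unfolding eq by (rule add_right_mono[OF le])
      from e2ennreal_mono[OF this] show ?thesis by (simp add: ennreal_max_0)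
    qed
    have "ennreal (\<integral>\<sigma>. max 0 (u \<sigma>) \<partial>\<mu>) = (\<integral>\<^sup>+\<sigma>. ennreal (max 0 (u \<sigma>)) \<partial>\<mu>)"
      by (rule nn_integral_eq_integral[OF intu', symmetric]) simp
    also have "\<dots> \<le> I" unfolding I_def by (rule nn_integral_mono) (rule pw)
    finally have le1: "ennreal (\<integral>\<sigma>. max 0 (u \<sigma>) \<partial>\<mu>) \<le> I" .
    have "(\<integral>\<sigma>. u \<sigma> \<partial>\<mu>) \<le> (\<integral>\<sigma>. max 0 (u \<sigma>) \<partial>\<mu>)"
      by (rule integral_mono[OF intu intu']) simp
    then have "ereal (\<integral>\<sigma>. u \<sigma> \<partial>\<mu>) \<le> enn2ereal (ennreal (\<integral>\<sigma>. max 0 (u \<sigma>) \<partial>\<mu>))"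
      by simp
    also have "\<dots> \<le> enn2ereal I" using le1 by (simp add: less_eq_ennreal.rep_eq)
    finally have "ereal ((Ssym \<mu> T \<gamma> x - \<nu>) * t - f t) + ereal C \<le> enn2ereal I"
      using iu by simp
    then show "ereal ((Ssym \<mu> T \<gamma> x - \<nu>) * t - f t) \<le> enn2ereal I - ereal C"
      by (simp add: ereal_le_minus_iff)
  qed
  then have "fstar f (Ssym \<mu> T \<gamma> x - \<nu>) + ereal C \<le> enn2ereal I"
    by (simp add: ereal_le_minus_iff)
  from e2ennreal_mono[OF this] show ?thesis unfolding I_def by simp
qed


lemma gT_measR: "sets R = sets M \<Longrightarrow> \<gamma> \<in> borel_measurable M \<Longrightarrow>
    (\<lambda>p. \<gamma> (T (fst p) (snd p))) \<in> borel_measurable (\<mu> \<Otimes>\<^sub>M R)"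
  by (subst measurable_cong_sets[OF sets_pair_measure_cong[OF refl]]) (assumption, rule refl, rule gT_meas)

lemma measR: "sets R = sets M \<Longrightarrow> g \<in> borel_measurable M \<Longrightarrow> g \<in> borel_measurable R"
  by (subst measurable_cong_sets) (assumption, rule refl, assumption)

lemma eexp_le:
  assumes R: "prob_space R" "sets R = sets M" and Rinv: "\<forall>\<sigma>. distr R M (T \<sigma>) = R"
    and g: "\<gamma> \<in> Mb M" and Sg: "Ssym \<mu> T \<gamma> \<in> Mb M"
  shows "eexp R (\<lambda>x. fstar f (Ssym \<mu> T \<gamma> x - \<nu>)) \<le> eexp R (\<lambda>x. fstar f (\<gamma> x - \<nu>))"
proof -
  interpret mu: prob_space \<mu> by (rule prob_mu)
  interpret pp: pair_prob_space \<mu> R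
    by (simp add: pair_prob_space_def pair_sigma_finite_def prob_mu R prob_space_imp_sigma_finite)
  define C where "C = \<bar>f 0\<bar>"
  have C0: "0 \<le> C" unfolding C_def by simp
  have lb: "- ereal C \<le> fstar f y" for y
  proof -
    have "- ereal C \<le> ereal (- f 0)" unfolding C_def by simp
    also have "\<dots> \<le> fstar f y" by (rule fstar_lb)
    finally show ?thesis .
  qed
  have spR: "space R = space M" using R(2) by (rule sets_eq_imp_space_eq)
  have gm: "\<gamma> \<in> borel_measurable M" using g by (rule Mb_meas)
  have Sgm: "Ssym \<mu> T \<gamma> \<in> borel_measurable M" using Sg by (rule Mb_meas)
  define h where "h = (\<lambda>y. e2ennreal (fstar f (y - \<nu>) + ereal C))"
  have e1: "eexp R (\<lambda>x. fstar f (Ssym \<mu> T \<gamma> x - \<nu>)) = enn2ereal (\<integral>\<^sup>+x. h (Ssym \<mu> T \<gamma> x) \<partial>R) - ereal C"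
    unfolding h_def
  proof (rule eexp_shift[OF R(1) _ _ C0])
    show "(\<lambda>x. fstar f (Ssym \<mu> T \<gamma> x - \<nu>)) \<in> borel_measurable R"
      using measR[OF R(2) Sgm] by measurable
    show "\<forall>x\<in>space R. - ereal C \<le> fstar f (Ssym \<mu> T \<gamma> x - \<nu>)" using lb by blast
  qed
  have e2: "eexp R (\<lambda>x. fstar f (\<gamma> x - \<nu>)) = enn2ereal (\<integral>\<^sup>+x. h (\<gamma> x) \<partial>R) - ereal C"
    unfolding h_def
  proof (rule eexp_shift[OF R(1) _ _ C0])
    show "(\<lambda>x. fstar f (\<gamma> x - \<nu>)) \<in> borel_measurable R"
      using measR[OF R(2) gm] by measurable
    show "\<forall>x\<in>space R. - ereal C \<le> fstar f (\<gamma> x - \<nu>)" using lb by blast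
  qed
  have hm: "(\<lambda>p. h (\<gamma> (T (fst p) (snd p)))) \<in> borel_measurable (\<mu> \<Otimes>\<^sub>M R)"
    unfolding h_def by (rule meas_h[OF gT_measR[OF R(2) gm]])
  have cp: "case_prod (\<lambda>\<sigma> x. h (\<gamma> (T \<sigma> x))) = (\<lambda>p. h (\<gamma> (T (fst p) (snd p))))"
    by (simp add: fun_eq_iff)
  have "(\<integral>\<^sup>+x. h (Ssym \<mu> T \<gamma> x) \<partial>R) \<le> (\<integral>\<^sup>+x. (\<integral>\<^sup>+\<sigma>. h (\<gamma> (T \<sigma> x)) \<partial>\<mu>) \<partial>R)"
  proof (rule nn_integral_mono)
    fix x assume "x \<in> space R"
    then have x: "x \<in> space M" using spR by simp
    show "h (Ssym \<mu> T \<gamma> x) \<le> (\<integral>\<^sup>+\<sigma>. h (\<gamma> (T \<sigma> x)) \<partial>\<mu>)"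
      unfolding h_def by (rule ptw[OF g x])
  qed
  also have "\<dots> = (\<integral>\<^sup>+\<sigma>. (\<integral>\<^sup>+x. h (\<gamma> (T \<sigma> x)) \<partial>R) \<partial>\<mu>)"
    by (rule pp.Fubini') (unfold cp, rule hm)
  also have "\<dots> = (\<integral>\<^sup>+\<sigma>. (\<integral>\<^sup>+x. h (\<gamma> x) \<partial>R) \<partial>\<mu>)"
  proof (rule nn_integral_cong)
    fix \<sigma> assume "\<sigma> \<in> space \<mu>"
    have Tm: "T \<sigma> \<in> measurable R M"
      by (subst measurable_cong_sets[OF R(2) refl]) (rule Tmeas)
    have hgm: "(\<lambda>x. h (\<gamma> x)) \<in> borel_measurable (distr R M (T \<sigma>))"
      unfolding h_def by (rule meas_h) (use gm in simp)
    have "(\<integral>\<^sup>+x. h (\<gamma> (T \<sigma> x)) \<partial>R) = (\<integral>\<^sup>+x. h (\<gamma> x) \<partial>distr R M (T \<sigma>))"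
      by (rule nn_integral_distr[OF Tm hgm, symmetric])
    also have "\<dots> = (\<integral>\<^sup>+x. h (\<gamma> x) \<partial>R)" using Rinv by simp
    finally show "(\<integral>\<^sup>+x. h (\<gamma> (T \<sigma> x)) \<partial>R) = (\<integral>\<^sup>+x. h (\<gamma> x) \<partial>R)" .
  qed
  also have "\<dots> = (\<integral>\<^sup>+x. h (\<gamma> x) \<partial>R)"
    by (simp add: mu.emeasure_space_1)
  finally have le: "(\<integral>\<^sup>+x. h (Ssym \<mu> T \<gamma> x) \<partial>R) \<le> (\<integral>\<^sup>+x. h (\<gamma> x) \<partial>R)" .
  show ?thesis unfolding e1 e2
    by (rule ereal_minus_mono[OF _ order_refl]) (use le in \<open>simp add: less_eq_ennreal.rep_eq\<close>)
qed

lemma Lambda_le: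
  assumes R: "prob_space R" "sets R = sets M" and Rinv: "\<forall>\<sigma>. distr R M (T \<sigma>) = R"
    and g: "\<gamma> \<in> Mb M" and Sg: "Ssym \<mu> T \<gamma> \<in> Mb M"
  shows "Lambda_f f R (Ssym \<mu> T \<gamma>) \<le> Lambda_f f R \<gamma>"
  unfolding Lambda_f_def
proof (rule INF_mono)
  fix \<nu> :: real assume "\<nu> \<in> UNIV"
  have "ereal \<nu> + eexp R (\<lambda>x. fstar f (Ssym \<mu> T \<gamma> x - \<nu>)) \<le> ereal \<nu> + eexp R (\<lambda>x. fstar f (\<gamma> x - \<nu>))"
    by (rule add_left_mono[OF eexp_le[OF R Rinv g Sg]])
  then show "\<exists>m\<in>UNIV. ereal m + eexp R (\<lambda>x. fstar f (Ssym \<mu> T \<gamma> x - m)) \<le> ereal \<nu> + eexp R (\<lambda>x. fstar f (\<gamma> x - \<nu>))"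
    by blast
qed

lemma S_in_Inv:
  assumes G: "\<Gamma> \<subseteq> Mb M" "Ssym \<mu> T ` \<Gamma> \<subseteq> \<Gamma>" and g: "\<gamma> \<in> \<Gamma>"
  shows "Ssym \<mu> T \<gamma> \<in> Inv M T \<Gamma>"
proof -
  have "\<gamma> \<in> borel_measurable M" using G g by (intro Mb_meas) blast
  then show ?thesis using G g S_inv unfolding Inv_def by blast
qed

lemma fdiv_eq:
  assumes P: "prob_space P" "sets P = sets M" and Pinv: "\<forall>\<sigma>. distr P M (T \<sigma>) = P"
    and Q: "prob_space Q" "sets Q = sets M" and Qinv: "\<forall>\<sigma>. distr Q M (T \<sigma>) = Q"
    and G: "\<Gamma> \<subseteq> Mb M" "Ssym \<mu> T ` \<Gamma> \<subseteq> \<Gamma>"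
  shows "fGamma_div f \<Gamma> Q P = fGamma_div f (Inv M T \<Gamma>) Q P"
proof (rule antisym)
  show "fGamma_div f \<Gamma> Q P \<le> fGamma_div f (Inv M T \<Gamma>) Q P"
    unfolding fGamma_div_def
  proof (rule SUP_least)
    fix \<gamma> assume g: "\<gamma> \<in> \<Gamma>"
    have gM: "\<gamma> \<in> Mb M" using G g by blast
    have SI: "Ssym \<mu> T \<gamma> \<in> Inv M T \<Gamma>" by (rule S_in_Inv[OF G g])
    then have SM: "Ssym \<mu> T \<gamma> \<in> Mb M" using G unfolding Inv_def by blast
    have "ereal (\<integral>x. \<gamma> x \<partial>Q) - Lambda_f f P \<gamma> \<le> ereal (\<integral>x. Ssym \<mu> T \<gamma> x \<partial>Q) - Lambda_f f P (Ssym \<mu> T \<gamma>)"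
      unfolding E_S[OF Q Qinv gM] by (rule ereal_minus_mono[OF order_refl Lambda_le[OF P Pinv gM SM]])
    also have "\<dots> \<le> (SUP \<gamma>\<in>Inv M T \<Gamma>. ereal (\<integral>x. \<gamma> x \<partial>Q) - Lambda_f f P \<gamma>)"
      by (rule SUP_upper[OF SI])
    finally show "ereal (\<integral>x. \<gamma> x \<partial>Q) - Lambda_f f P \<gamma> \<le> (SUP \<gamma>\<in>Inv M T \<Gamma>. ereal (\<integral>x. \<gamma> x \<partial>Q) - Lambda_f f P \<gamma>)" .
  qed
  show "fGamma_div f (Inv M T \<Gamma>) Q P \<le> fGamma_div f \<Gamma> Q P"
    unfolding fGamma_div_def by (rule SUP_subset_mono) (auto simp: Inv_def)
qed

lemma IPM_eq:
  assumes P: "prob_space P" "sets P = sets M" and Pinv: "\<forall>\<sigma>. distr P M (T \<sigma>) = P"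
    and Q: "prob_space Q" "sets Q = sets M" and Qinv: "\<forall>\<sigma>. distr Q M (T \<sigma>) = Q"
    and G: "\<Gamma> \<subseteq> Mb M" "Ssym \<mu> T ` \<Gamma> \<subseteq> \<Gamma>"
  shows "IPM \<Gamma> Q P = IPM (Inv M T \<Gamma>) Q P"
proof (rule antisym)
  show "IPM \<Gamma> Q P \<le> IPM (Inv M T \<Gamma>) Q P"
    unfolding IPM_def
  proof (rule SUP_least)
    fix \<gamma> assume g: "\<gamma> \<in> \<Gamma>"
    have gM: "\<gamma> \<in> Mb M" using G g by blast
    have SI: "Ssym \<mu> T \<gamma> \<in> Inv M T \<Gamma>" by (rule S_in_Inv[OF G g])
    have "ereal ((\<integral>x. \<gamma> x \<partial>Q) - (\<integral>x. \<gamma> x \<partial>P)) = ereal ((\<integral>x. Ssym \<mu> T \<gamma> x \<partial>Q) - (\<integral>x. Ssym \<mu> T \<gamma> x \<partial>P))"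
      by (simp add: E_S[OF Q Qinv gM] E_S[OF P Pinv gM])
    also have "\<dots> \<le> (SUP \<gamma>\<in>Inv M T \<Gamma>. ereal ((\<integral>x. \<gamma> x \<partial>Q) - (\<integral>x. \<gamma> x \<partial>P)))"
      by (rule SUP_upper[OF SI])
    finally show "ereal ((\<integral>x. \<gamma> x \<partial>Q) - (\<integral>x. \<gamma> x \<partial>P)) \<le> (SUP \<gamma>\<in>Inv M T \<Gamma>. ereal ((\<integral>x. \<gamma> x \<partial>Q) - (\<integral>x. \<gamma> x \<partial>P)))" .
  qed
  show "IPM (Inv M T \<Gamma>) Q P \<le> IPM \<Gamma> Q P"
    unfolding IPM_def by (rule SUP_subset_mono) (auto simp: Inv_def)
qed


lemma TT_meas: "(\<lambda>p. (T (snd p) (fst (fst p)), T (snd p) (snd (fst p)))) \<in> measurable ((M \<Otimes>\<^sub>M M) \<Otimes>\<^sub>M \<mu>) (M \<Otimes>\<^sub>M M)"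
proof (rule measurable_Pair)
  have a1: "(\<lambda>p. (snd p, fst (fst p))) \<in> measurable ((M \<Otimes>\<^sub>M M) \<Otimes>\<^sub>M \<mu>) (\<mu> \<Otimes>\<^sub>M M)" by measurable
  have a2: "(\<lambda>p. (snd p, snd (fst p))) \<in> measurable ((M \<Otimes>\<^sub>M M) \<Otimes>\<^sub>M \<mu>) (\<mu> \<Otimes>\<^sub>M M)" by measurable
  have "(\<lambda>(\<sigma>, x). T \<sigma> x) \<circ> (\<lambda>p. (snd p, fst (fst p))) \<in> measurable ((M \<Otimes>\<^sub>M M) \<Otimes>\<^sub>M \<mu>) M"
    by (rule measurable_comp[OF a1 Tprod])
  then show "(\<lambda>p. T (snd p) (fst (fst p))) \<in> measurable ((M \<Otimes>\<^sub>M M) \<Otimes>\<^sub>M \<mu>) M" by (simp add: comp_def)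
  have "(\<lambda>(\<sigma>, x). T \<sigma> x) \<circ> (\<lambda>p. (snd p, snd (fst p))) \<in> measurable ((M \<Otimes>\<^sub>M M) \<Otimes>\<^sub>M \<mu>) M"
    by (rule measurable_comp[OF a2 Tprod])
  then show "(\<lambda>p. T (snd p) (snd (fst p))) \<in> measurable ((M \<Otimes>\<^sub>M M) \<Otimes>\<^sub>M \<mu>) M" by (simp add: comp_def)
qed

lemma Eexp_le:
  assumes R1: "prob_space R1" "sets R1 = sets M" and R1inv: "\<forall>\<sigma>. distr R1 M (T \<sigma>) = R1"
    and R2: "prob_space R2" "sets R2 = sets M" and R2inv: "\<forall>\<sigma>. distr R2 M (T \<sigma>) = R2"
    and g1: "g1 \<in> Mb M" and g2: "g2 \<in> Mb M" and Sg1: "Ssym \<mu> T g1 \<in> Mb M" and Sg2: "Ssym \<mu> T g2 \<in> Mb M"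
    and cm: "case_prod c \<in> borel_measurable (M \<Otimes>\<^sub>M M)" and c0: "\<forall>x\<in>space M. \<forall>y\<in>space M. c x y \<ge> 0"
    and eps: "\<epsilon> > 0"
    and cinv: "\<forall>\<sigma>. \<forall>x\<in>space M. \<forall>y\<in>space M. c (T \<sigma> x) (T \<sigma> y) = c x y"
  shows "(\<integral>z. exp ((Ssym \<mu> T g1 (fst z) + Ssym \<mu> T g2 (snd z) - c (fst z) (snd z)) / \<epsilon>) \<partial>(R1 \<Otimes>\<^sub>M R2))
      \<le> (\<integral>z. exp ((g1 (fst z) + g2 (snd z) - c (fst z) (snd z)) / \<epsilon>) \<partial>(R1 \<Otimes>\<^sub>M R2))"
proof -
  interpret mu: prob_space \<mu> by (rule prob_mu)
  define N where "N = R1 \<Otimes>\<^sub>M R2"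
  have probN: "prob_space N" unfolding N_def by (rule prob_space_pair[OF R1(1) R2(1)])
  interpret N: prob_space N by (rule probN)
  interpret pp: pair_prob_space N \<mu>
    by (simp add: pair_prob_space_def pair_sigma_finite_def prob_mu probN prob_space_imp_sigma_finite)
  have setsN: "sets N = sets (M \<Otimes>\<^sub>M M)" unfolding N_def by (rule sets_pair_measure_cong[OF R1(2) R2(2)])
  have spN: "space N = space M \<times> space M"
    using sets_eq_imp_space_eq[OF setsN] by (simp add: space_pair_measure)
  have setsNmu: "sets (N \<Otimes>\<^sub>M \<mu>) = sets ((M \<Otimes>\<^sub>M M) \<Otimes>\<^sub>M \<mu>)" by (rule sets_pair_measure_cong[OF setsN refl])
  have spNmu: "space (N \<Otimes>\<^sub>M \<mu>) = (space M \<times> space M) \<times> UNIV"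
    by (simp add: space_pair_measure spN space_mu)
  have cm': "(\<lambda>z. c (fst z) (snd z)) \<in> borel_measurable (M \<Otimes>\<^sub>M M)" using cm by (simp add: case_prod_beta')
  obtain B1 where B1: "\<forall>x\<in>space M. \<bar>g1 x\<bar> \<le> B1" using Mb_bound[OF g1] by blast
  obtain B2 where B2: "\<forall>x\<in>space M. \<bar>g2 x\<bar> \<le> B2" using Mb_bound[OF g2] by blast
  obtain B3 where B3: "\<forall>x\<in>space M. \<bar>Ssym \<mu> T g1 x\<bar> \<le> B3" using Mb_bound[OF Sg1] by blast
  obtain B4 where B4: "\<forall>x\<in>space M. \<bar>Ssym \<mu> T g2 x\<bar> \<le> B4" using Mb_bound[OF Sg2] by blast
  have g1m[measurable]: "g1 \<in> borel_measurable M" using g1 by (rule Mb_meas)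
  have g2m[measurable]: "g2 \<in> borel_measurable M" using g2 by (rule Mb_meas)
  have Sg1m[measurable]: "Ssym \<mu> T g1 \<in> borel_measurable M" using Sg1 by (rule Mb_meas)
  have Sg2m[measurable]: "Ssym \<mu> T g2 \<in> borel_measurable M" using Sg2 by (rule Mb_meas)
  note cm'[measurable]
  define F where "F = (\<lambda>z. exp ((g1 (fst z) + g2 (snd z) - c (fst z) (snd z)) / \<epsilon>))"
  define SF where "SF = (\<lambda>z. exp ((Ssym \<mu> T g1 (fst z) + Ssym \<mu> T g2 (snd z) - c (fst z) (snd z)) / \<epsilon>))"
  have Fm: "F \<in> borel_measurable (M \<Otimes>\<^sub>M M)" unfolding F_def by measurable
  have SFm: "SF \<in> borel_measurable (M \<Otimes>\<^sub>M M)" unfolding SF_def by measurable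
  have Fb: "norm (F z) \<le> exp ((B1 + B2) / \<epsilon>)" if z: "z \<in> space M \<times> space M" for z
  proof -
    have zz: "fst z \<in> space M" "snd z \<in> space M" using z by (auto simp: mem_Times_iff)
    have "\<bar>g1 (fst z)\<bar> \<le> B1" "\<bar>g2 (snd z)\<bar> \<le> B2" "0 \<le> c (fst z) (snd z)"
      using bspec[OF B1 zz(1)] bspec[OF B2 zz(2)] bspec[OF bspec[OF c0 zz(1)] zz(2)] by simp_all
    then have "g1 (fst z) + g2 (snd z) - c (fst z) (snd z) \<le> B1 + B2" by linarith
    then have "(g1 (fst z) + g2 (snd z) - c (fst z) (snd z)) / \<epsilon> \<le> (B1 + B2) / \<epsilon>"
      using eps by (simp add: divide_right_mono)
    then show ?thesis unfolding F_def by simp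
  qed
  have SFb: "norm (SF z) \<le> exp ((B3 + B4) / \<epsilon>)" if z: "z \<in> space M \<times> space M" for z
  proof -
    have zz: "fst z \<in> space M" "snd z \<in> space M" using z by (auto simp: mem_Times_iff)
    have "\<bar>Ssym \<mu> T g1 (fst z)\<bar> \<le> B3" "\<bar>Ssym \<mu> T g2 (snd z)\<bar> \<le> B4" "0 \<le> c (fst z) (snd z)"
      using bspec[OF B3 zz(1)] bspec[OF B4 zz(2)] bspec[OF bspec[OF c0 zz(1)] zz(2)] by simp_all
    then have "Ssym \<mu> T g1 (fst z) + Ssym \<mu> T g2 (snd z) - c (fst z) (snd z) \<le> B3 + B4" by linarith
    then have "(Ssym \<mu> T g1 (fst z) + Ssym \<mu> T g2 (snd z) - c (fst z) (snd z)) / \<epsilon> \<le> (B3 + B4) / \<epsilon>"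
      using eps by (simp add: divide_right_mono)
    then show ?thesis unfolding SF_def by simp
  qed
  have FmN: "F \<in> borel_measurable N" by (subst measurable_cong_sets[OF setsN refl]) (rule Fm)
  have SFmN: "SF \<in> borel_measurable N" by (subst measurable_cong_sets[OF setsN refl]) (rule SFm)
  have intSF: "integrable N SF"
    by (rule N.integrable_const_bound[OF _ SFmN, where B="exp ((B3 + B4) / \<epsilon>)"])
       (rule AE_I2, use SFb spN in auto)
  define G where "G = (\<lambda>p. F (T (snd p) (fst (fst p)), T (snd p) (snd (fst p))))"
  have Gm0: "G \<in> borel_measurable ((M \<Otimes>\<^sub>M M) \<Otimes>\<^sub>M \<mu>)"
    unfolding G_def using measurable_comp[OF TT_meas Fm] by (simp add: comp_def)
  have Gm: "G \<in> borel_measurable (N \<Otimes>\<^sub>M \<mu>)" by (subst measurable_cong_sets[OF setsNmu refl]) (rule Gm0)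
  have Gb: "norm (G p) \<le> exp ((B1 + B2) / \<epsilon>)" if p: "p \<in> space (N \<Otimes>\<^sub>M \<mu>)" for p
  proof -
    have "fst p \<in> space M \<times> space M" using p unfolding spNmu by (simp add: mem_Times_iff)
    then have h: "fst (fst p) \<in> space M" "snd (fst p) \<in> space M" by (simp_all add: mem_Times_iff)
    have "(T (snd p) (fst (fst p)), T (snd p) (snd (fst p))) \<in> space M \<times> space M"
      using Tspace[OF h(1)] Tspace[OF h(2)] by simp
    then show ?thesis unfolding G_def by (rule Fb)
  qed
  have finNmu: "finite_measure (N \<Otimes>\<^sub>M \<mu>)"
    using prob_space_pair[OF probN prob_mu] by (simp add: prob_space_def)
  have intG: "integrable (N \<Otimes>\<^sub>M \<mu>) G"
    by (rule finite_measure.integrable_const_bound[OF finNmu _ Gm, where B="exp ((B1 + B2) / \<epsilon>)"])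
       (rule AE_I2, rule Gb)
  have pw: "SF z \<le> (\<integral>\<sigma>. G (z, \<sigma>) \<partial>\<mu>)" if z: "z \<in> space N" for z
  proof -
    define x where "x = fst z"
    define y where "y = snd z"
    have zz: "z \<in> space M \<times> space M" using z spN by simp
    have x: "x \<in> space M" and y: "y \<in> space M" using zz unfolding x_def y_def by (simp_all add: mem_Times_iff)
    define v where "v = (\<lambda>\<sigma>. g1 (T \<sigma> x) + g2 (T \<sigma> y) - c x y)"
    have m1: "(\<lambda>\<sigma>. g1 (T \<sigma> x)) \<in> borel_measurable \<mu>" by (rule gT_meas1[OF g1m x])
    have m2: "(\<lambda>\<sigma>. g2 (T \<sigma> y)) \<in> borel_measurable \<mu>" by (rule gT_meas1[OF g2m y])
    have i1: "integrable \<mu> (\<lambda>\<sigma>. g1 (T \<sigma> x))"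
      by (rule mu.integrable_const_bound[OF _ m1, where B=B1]) (rule AE_I2, use bspec[OF B1 Tspace[OF x]] in simp)
    have i2: "integrable \<mu> (\<lambda>\<sigma>. g2 (T \<sigma> y))"
      by (rule mu.integrable_const_bound[OF _ m2, where B=B2]) (rule AE_I2, use bspec[OF B2 Tspace[OF y]] in simp)
    have iv: "integrable \<mu> v" unfolding v_def using i1 i2 by simp
    have Iv: "(\<integral>\<sigma>. v \<sigma> \<partial>\<mu>) = Ssym \<mu> T g1 x + Ssym \<mu> T g2 y - c x y"
      unfolding v_def Ssym_def using i1 i2 by (simp add: mu.prob_space)
    define a where "a = (\<integral>\<sigma>. v \<sigma> \<partial>\<mu>) / \<epsilon>"
    have SFz: "SF z = exp a" unfolding SF_def a_def Iv x_def y_def by simp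
    have Gz: "G (z, \<sigma>) = exp (v \<sigma> / \<epsilon>)" for \<sigma>
    proof -
      have "G (z, \<sigma>) = exp ((g1 (T \<sigma> x) + g2 (T \<sigma> y) - c (T \<sigma> x) (T \<sigma> y)) / \<epsilon>)"
        unfolding G_def F_def x_def y_def by simp
      then show ?thesis using cinv[rule_format, OF x y, of \<sigma>] unfolding v_def by simp
    qed
    have tang: "exp a * (1 + (v \<sigma> / \<epsilon> - a)) \<le> exp (v \<sigma> / \<epsilon>)" for \<sigma>
    proof -
      have "exp a * (1 + (v \<sigma> / \<epsilon> - a)) \<le> exp a * exp (v \<sigma> / \<epsilon> - a)"
        by (rule mult_left_mono) simp_all
      also have "\<dots> = exp (v \<sigma> / \<epsilon>)" by (simp add: exp_diff)
      finally show ?thesis .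
    qed
    have iaff: "integrable \<mu> (\<lambda>\<sigma>. exp a * (1 + (v \<sigma> / \<epsilon> - a)))" using iv by simp
    have Gzm: "(\<lambda>\<sigma>. G (z, \<sigma>)) \<in> borel_measurable \<mu>"
      by (rule measurable_Pair2[OF Gm z])
    have iG: "integrable \<mu> (\<lambda>\<sigma>. G (z, \<sigma>))"
    proof (rule mu.integrable_const_bound[OF _ Gzm, where B="exp ((B1 + B2) / \<epsilon>)"])
      show "AE \<sigma> in \<mu>. norm (G (z, \<sigma>)) \<le> exp ((B1 + B2) / \<epsilon>)"
        by (rule AE_I2, rule Gb) (use z in \<open>simp add: space_pair_measure space_mu\<close>)
    qed
    have "(\<integral>\<sigma>. exp a * (1 + (v \<sigma> / \<epsilon> - a)) \<partial>\<mu>) = exp a * (1 + ((\<integral>\<sigma>. v \<sigma> \<partial>\<mu>) / \<epsilon> - a))"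
      using iv by (simp add: mu.prob_space algebra_simps)
    also have "\<dots> = exp a" by (simp add: a_def)
    finally have "exp a = (\<integral>\<sigma>. exp a * (1 + (v \<sigma> / \<epsilon> - a)) \<partial>\<mu>)" ..
    also have "\<dots> \<le> (\<integral>\<sigma>. G (z, \<sigma>) \<partial>\<mu>)"
      by (rule integral_mono[OF iaff iG]) (simp add: Gz tang)
    finally show ?thesis using SFz by simp
  qed
  have "(\<integral>z. SF z \<partial>N) \<le> (\<integral>z. (\<integral>\<sigma>. G (z, \<sigma>) \<partial>\<mu>) \<partial>N)"
    by (rule integral_mono[OF intSF pp.integrable_fst'[OF intG]]) (rule pw)
  also have "\<dots> = (\<integral>\<sigma>. (\<integral>z. G (z, \<sigma>) \<partial>N) \<partial>\<mu>)"
    using pp.Fubini_integral[of "\<lambda>z \<sigma>. G (z, \<sigma>)"] intG by simp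
  also have "\<dots> = (\<integral>\<sigma>. (\<integral>z. F z \<partial>N) \<partial>\<mu>)"
  proof (rule Bochner_Integration.integral_cong[OF refl])
    fix \<sigma> assume "\<sigma> \<in> space \<mu>"
    have T1: "T \<sigma> \<in> measurable R1 M" by (subst measurable_cong_sets[OF R1(2) refl]) (rule Tmeas)
    have T2: "T \<sigma> \<in> measurable R2 M" by (subst measurable_cong_sets[OF R2(2) refl]) (rule Tmeas)
    have sf: "sigma_finite_measure (distr R2 M (T \<sigma>))"
      using R2inv R2(1) by (simp add: prob_space_imp_sigma_finite)
    have D: "distr N (M \<Otimes>\<^sub>M M) (\<lambda>(x, y). (T \<sigma> x, T \<sigma> y)) = N"
      unfolding N_def using pair_measure_distr[OF T1 T2 sf] R1inv R2inv by simp
    have Phi: "(\<lambda>(x, y). (T \<sigma> x, T \<sigma> y)) \<in> measurable N (M \<Otimes>\<^sub>M M)"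
      unfolding N_def using T1 T2 by measurable
    have "(\<integral>z. G (z, \<sigma>) \<partial>N) = (\<integral>z. F ((\<lambda>(x, y). (T \<sigma> x, T \<sigma> y)) z) \<partial>N)"
      unfolding G_def by (simp add: case_prod_beta')
    also have "\<dots> = (\<integral>z. F z \<partial>distr N (M \<Otimes>\<^sub>M M) (\<lambda>(x, y). (T \<sigma> x, T \<sigma> y)))"
      by (rule integral_distr[OF Phi Fm, symmetric])
    also have "\<dots> = (\<integral>z. F z \<partial>N)" by (simp only: D)
    finally show "(\<integral>z. G (z, \<sigma>) \<partial>N) = (\<integral>z. F z \<partial>N)" .
  qed
  also have "\<dots> = (\<integral>z. F z \<partial>N)" by (simp add: mu.prob_space)
  finally show ?thesis unfolding N_def F_def SF_def .
qed


lemma W_eq: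
  assumes R1: "prob_space R1" "sets R1 = sets M" and R1inv: "\<forall>\<sigma>. distr R1 M (T \<sigma>) = R1"
    and R2: "prob_space R2" "sets R2 = sets M" and R2inv: "\<forall>\<sigma>. distr R2 M (T \<sigma>) = R2"
    and G: "\<Gamma> \<subseteq> Mb M \<times> Mb M" "(\<lambda>g. (Ssym \<mu> T (fst g), Ssym \<mu> T (snd g))) ` \<Gamma> \<subseteq> \<Gamma>"
    and cm: "case_prod c \<in> borel_measurable (M \<Otimes>\<^sub>M M)" and c0: "\<forall>x\<in>space M. \<forall>y\<in>space M. c x y \<ge> 0"
    and eps: "\<epsilon> > 0"
    and cinv: "\<forall>\<sigma>. \<forall>x\<in>space M. \<forall>y\<in>space M. c (T \<sigma> x) (T \<sigma> y) = c x y"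
  shows "W_ce c \<epsilon> \<Gamma> R2 R1 = W_ce c \<epsilon> (Inv2 M T \<Gamma>) R2 R1"
proof (rule antisym)
  show "W_ce c \<epsilon> \<Gamma> R2 R1 \<le> W_ce c \<epsilon> (Inv2 M T \<Gamma>) R2 R1"
    unfolding W_ce_def
  proof (rule SUP_least)
    fix g assume g: "g \<in> \<Gamma>"
    define Sg where "Sg = (Ssym \<mu> T (fst g), Ssym \<mu> T (snd g))"
    have SgG: "Sg \<in> \<Gamma>" using G(2) g unfolding Sg_def by blast
    have gg: "g \<in> Mb M \<times> Mb M" using G(1) g by blast
    then have g1: "fst g \<in> Mb M" and g2: "snd g \<in> Mb M" by (simp_all add: mem_Times_iff)
    have sg: "Sg \<in> Mb M \<times> Mb M" using G(1) SgG by blast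
    then have Sg1: "Ssym \<mu> T (fst g) \<in> Mb M" and Sg2: "Ssym \<mu> T (snd g) \<in> Mb M"
      unfolding Sg_def by (simp_all add: mem_Times_iff)
    have SI: "Sg \<in> Inv2 M T \<Gamma>" unfolding Inv2_def
      using SgG S_inv[OF Mb_meas[OF g1]] S_inv[OF Mb_meas[OF g2]] unfolding Sg_def by simp
    have E: "(\<integral>z. exp ((Ssym \<mu> T (fst g) (fst z) + Ssym \<mu> T (snd g) (snd z) - c (fst z) (snd z)) / \<epsilon>) \<partial>(R1 \<Otimes>\<^sub>M R2))
      \<le> (\<integral>z. exp ((fst g (fst z) + snd g (snd z) - c (fst z) (snd z)) / \<epsilon>) \<partial>(R1 \<Otimes>\<^sub>M R2))"
      by (rule Eexp_le[OF R1 R1inv R2 R2inv g1 g2 Sg1 Sg2 cm c0 eps cinv])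
    have E': "\<epsilon> * (\<integral>z. exp ((Ssym \<mu> T (fst g) (fst z) + Ssym \<mu> T (snd g) (snd z) - c (fst z) (snd z)) / \<epsilon>) \<partial>(R1 \<Otimes>\<^sub>M R2))
      \<le> \<epsilon> * (\<integral>z. exp ((fst g (fst z) + snd g (snd z) - c (fst z) (snd z)) / \<epsilon>) \<partial>(R1 \<Otimes>\<^sub>M R2))"
      using E eps by (simp add: mult_left_mono)
    have "ereal ((\<integral>x. fst g x \<partial>R1) + (\<integral>y. snd g y \<partial>R2)
      - \<epsilon> * (\<integral>z. exp ((fst g (fst z) + snd g (snd z) - c (fst z) (snd z)) / \<epsilon>) \<partial>(R1 \<Otimes>\<^sub>M R2)) + \<epsilon>)
      \<le> ereal ((\<integral>x. fst Sg x \<partial>R1) + (\<integral>y. snd Sg y \<partial>R2)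
      - \<epsilon> * (\<integral>z. exp ((fst Sg (fst z) + snd Sg (snd z) - c (fst z) (snd z)) / \<epsilon>) \<partial>(R1 \<Otimes>\<^sub>M R2)) + \<epsilon>)"
      unfolding Sg_def using E' E_S[OF R1 R1inv g1] E_S[OF R2 R2inv g2] by simp
    also have "\<dots> \<le> (SUP g\<in>Inv2 M T \<Gamma>. ereal ((\<integral>x. fst g x \<partial>R1) + (\<integral>y. snd g y \<partial>R2)
      - \<epsilon> * (\<integral>z. exp ((fst g (fst z) + snd g (snd z) - c (fst z) (snd z)) / \<epsilon>) \<partial>(R1 \<Otimes>\<^sub>M R2)) + \<epsilon>))"
      by (rule SUP_upper[OF SI])
    finally show "ereal ((\<integral>x. fst g x \<partial>R1) + (\<integral>y. snd g y \<partial>R2)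
      - \<epsilon> * (\<integral>z. exp ((fst g (fst z) + snd g (snd z) - c (fst z) (snd z)) / \<epsilon>) \<partial>(R1 \<Otimes>\<^sub>M R2)) + \<epsilon>)
      \<le> (SUP g\<in>Inv2 M T \<Gamma>. ereal ((\<integral>x. fst g x \<partial>R1) + (\<integral>y. snd g y \<partial>R2)
      - \<epsilon> * (\<integral>z. exp ((fst g (fst z) + snd g (snd z) - c (fst z) (snd z)) / \<epsilon>) \<partial>(R1 \<Otimes>\<^sub>M R2)) + \<epsilon>))" .
  qed
  show "W_ce c \<epsilon> (Inv2 M T \<Gamma>) R2 R1 \<le> W_ce c \<epsilon> \<Gamma> R2 R1"
    unfolding W_ce_def by (rule SUP_subset_mono) (auto simp: Inv2_def)
qed

end

theorem theorem1:
  fixes M :: "'a measure" and \<mu> :: "'s::{topological_group_add, t2_space} measure"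
    and T :: "'s \<Rightarrow> 'a \<Rightarrow> 'a" and P Q :: "'a measure"
  assumes cpt: "compact (UNIV :: 's set)"
    and haar: "haar_prob \<mu>"
    and act: "measurable_action \<mu> M T"
    and P: "prob_space P" "sets P = sets M"
    and Q: "prob_space Q" "sets Q = sets M"
    and Pinv: "\<forall>\<sigma>. distr P M (T \<sigma>) = P"
    and Qinv: "\<forall>\<sigma>. distr Q M (T \<sigma>) = Q"
  shows
    "(\<forall>f (\<Gamma> :: ('a \<Rightarrow> real) set). admissible_f f \<longrightarrow> \<Gamma> \<subseteq> Mb M \<longrightarrow> Ssym \<mu> T ` \<Gamma> \<subseteq> \<Gamma> \<longrightarrow>
        fGamma_div f \<Gamma> Q P = fGamma_div f (Inv M T \<Gamma>) Q P \<and>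
        IPM \<Gamma> Q P = IPM (Inv M T \<Gamma>) Q P)
     \<and>
     (\<forall>(\<Gamma> :: (('a \<Rightarrow> real) \<times> ('a \<Rightarrow> real)) set) c \<epsilon>.
        \<Gamma> \<subseteq> Mb M \<times> Mb M \<longrightarrow> (\<lambda>g. (Ssym \<mu> T (fst g), Ssym \<mu> T (snd g))) ` \<Gamma> \<subseteq> \<Gamma> \<longrightarrow>
        case_prod c \<in> borel_measurable (M \<Otimes>\<^sub>M M) \<longrightarrow> (\<forall>x\<in>space M. \<forall>y\<in>space M. c x y \<ge> 0) \<longrightarrow>
        \<epsilon> > 0 \<longrightarrow>
        (\<forall>\<sigma>. \<forall>x\<in>space M. \<forall>y\<in>space M. c (T \<sigma> x) (T \<sigma> y) = c x y) \<longrightarrow>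
        sinkhorn c \<epsilon> \<Gamma> Q P = sinkhorn c \<epsilon> (Inv2 M T \<Gamma>) Q P)"
proof (intro conjI allI impI)
  fix f and \<Gamma> :: "('a \<Rightarrow> real) set"
  assume G: "\<Gamma> \<subseteq> Mb M" "Ssym \<mu> T ` \<Gamma> \<subseteq> \<Gamma>"
  show "fGamma_div f \<Gamma> Q P = fGamma_div f (Inv M T \<Gamma>) Q P"
    by (rule fdiv_eq[OF haar act P Pinv Q Qinv G])
  show "IPM \<Gamma> Q P = IPM (Inv M T \<Gamma>) Q P"
    by (rule IPM_eq[OF haar act P Pinv Q Qinv G])
next
  fix \<Gamma> :: "(('a \<Rightarrow> real) \<times> ('a \<Rightarrow> real)) set" and c :: "'a \<Rightarrow> 'a \<Rightarrow> real" and \<epsilon> :: real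
  assume G: "\<Gamma> \<subseteq> Mb M \<times> Mb M" "(\<lambda>g. (Ssym \<mu> T (fst g), Ssym \<mu> T (snd g))) ` \<Gamma> \<subseteq> \<Gamma>"
    and cm: "case_prod c \<in> borel_measurable (M \<Otimes>\<^sub>M M)" and c0: "\<forall>x\<in>space M. \<forall>y\<in>space M. c x y \<ge> 0"
    and eps: "\<epsilon> > 0"
    and cinv: "\<forall>\<sigma>. \<forall>x\<in>space M. \<forall>y\<in>space M. c (T \<sigma> x) (T \<sigma> y) = c x y"
  have 1: "W_ce c \<epsilon> \<Gamma> Q P = W_ce c \<epsilon> (Inv2 M T \<Gamma>) Q P"
    by (rule W_eq[OF haar act P Pinv Q Qinv G cm c0 eps cinv])
  have 2: "W_ce c \<epsilon> \<Gamma> Q Q = W_ce c \<epsilon> (Inv2 M T \<Gamma>) Q Q"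
    by (rule W_eq[OF haar act Q Qinv Q Qinv G cm c0 eps cinv])
  have 3: "W_ce c \<epsilon> \<Gamma> P P = W_ce c \<epsilon> (Inv2 M T \<Gamma>) P P"
    by (rule W_eq[OF haar act P Pinv P Pinv G cm c0 eps cinv])
  show "sinkhorn c \<epsilon> \<Gamma> Q P = sinkhorn c \<epsilon> (Inv2 M T \<Gamma>) Q P"
    unfolding sinkhorn_def 1 2 3 ..
qed

end
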